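(* Let $\Omega\subset\mathbb{R}^n$ and $v\in L^2_{\mathrm{loc}}(\Omega)$ (possibly vector-valued) be such that $$\int_{B_{mr}}|v|^2\,dx>\int_{B_{Mr}}|v-(v)_{B_{Mr}}|^2\,dx$$ for some concentric balls $B_{mr}\subset B_{Mr}\subset\subset\Omega$, where $0<m<M<\infty$. Then for any $\kappa\in[m,M]$, $$\fint_{B_{\kappa r}}|v|^2\,dx\leq 9\fint_{B_{mr}}|v|^2\,dx.$$
   Context: $(v)_{B}=\fint_B v\,dx=\frac{1}{|B|}\int_B v\,dx$ denotes the integral average; balls $B_{\kappa r}$ are concentric with $B_{mr}$ and $B_{Mr}$. *)

theory Defs
  imports "HOL-Analysis.Analysis"
begin

definition L2_loc :: "'a::euclidean_space set \<Rightarrow> ('a \<Rightarrow> 'b::euclidean_space) \<Rightarrow> bool" where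
  "L2_loc \<Omega> v \<longleftrightarrow> v \<in> borel_measurable (lebesgue_on \<Omega>) \<and>
     (\<forall>K. compact K \<and> K \<subseteq> \<Omega> \<longrightarrow> integrable (lebesgue_on K) (\<lambda>x. (norm (v x))\<^sup>2))"

definition avg :: "'a::euclidean_space set \<Rightarrow> ('a \<Rightarrow> 'b::euclidean_space) \<Rightarrow> 'b" where
  "avg B f = (1 / measure lebesgue B) *\<^sub>R integral\<^sup>L (lebesgue_on B) f"

end

theory Submission
  imports Defs
begin

lemma meas_ball_pos: "r > 0 \<Longrightarrow> measure lebesgue (ball (c::'a::euclidean_space) r) > 0"
  by (simp add: measure_completion)

lemma sq2: "((p::real) + q)\<^sup>2 \<le> 2 * p\<^sup>2 + 2 * q\<^sup>2"
proof -
  have "0 \<le> (p - q)\<^sup>2" by simp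
  thus ?thesis unfolding power2_diff power2_sum by linarith
qed

lemma sq3: "((p::real) + q)\<^sup>2 \<le> 3 * p\<^sup>2 + 3 / 2 * q\<^sup>2"
proof -
  have "0 \<le> (2 * p - q)\<^sup>2" by simp
  thus ?thesis unfolding power2_diff power2_sum power_mult_distrib by simp
qed

theorem lemma4p2:
  fixes \<Omega> :: "'a::euclidean_space set" and v :: "'a \<Rightarrow> 'b::euclidean_space"
    and x0 :: 'a and r m M \<kappa> :: real
  assumes "L2_loc \<Omega> v"
    and "0 < r" and "0 < m" and "m < M"
    and "cball x0 (M * r) \<subseteq> \<Omega>"
    and "integral\<^sup>L (lebesgue_on (ball x0 (m * r))) (\<lambda>x. (norm (v x))\<^sup>2)
         > integral\<^sup>L (lebesgue_on (ball x0 (M * r)))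
             (\<lambda>x. (norm (v x - avg (ball x0 (M * r)) v))\<^sup>2)"
    and "m \<le> \<kappa>" and "\<kappa> \<le> M"
  shows "avg (ball x0 (\<kappa> * r)) (\<lambda>x. (norm (v x))\<^sup>2)
         \<le> 9 * avg (ball x0 (m * r)) (\<lambda>x. (norm (v x))\<^sup>2)"
proof -
  define C where "C = cball x0 (M * r)"
  define N where "N = lebesgue_on C"
  define a where "a = avg (ball x0 (M * r)) v"
  define Bm where "Bm = ball x0 (m * r)"
  define Bk where "Bk = ball x0 (\<kappa> * r)"
  define BM where "BM = ball x0 (M * r)"
  have Csets: "C \<in> sets lebesgue" unfolding C_def by simp
  have sub: "Bm \<subseteq> Bk" "Bk \<subseteq> BM" "BM \<subseteq> C"
    unfolding Bm_def Bk_def BM_def C_def using assms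
    by (auto intro!: ball_subset_ball_iff[THEN iffD2] mult_right_mono)
  have vm: "v \<in> borel_measurable N"
    using assms(1,5) unfolding L2_loc_def N_def C_def by (blast intro: measurable_restrict_mono)
  have iv: "integrable N (\<lambda>x. (norm (v x))\<^sup>2)"
    using assms(1,5) unfolding L2_loc_def N_def C_def by auto
  have fin: "finite_measure N"
    unfolding N_def C_def by (simp add: finite_measure_lebesgue_on lmeasurable_cball)
  have conv: "integral\<^sup>L (lebesgue_on S) f = integral\<^sup>L N (\<lambda>x. indicator S x * f x)"
    if "S \<subseteq> C" "S \<in> sets lebesgue" for S and f :: "'a \<Rightarrow> real"
  proof -
    have "integral\<^sup>L (lebesgue_on S) f = integral\<^sup>L N (\<lambda>x. if x \<in> S then f x else 0)"
      unfolding N_def using integral_restrict[OF that Csets, of f] by simp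
    also have "\<dots> = integral\<^sup>L N (\<lambda>x. indicator S x * f x)"
      by (rule Bochner_Integration.integral_cong) (auto simp: indicator_def)
    finally show ?thesis .
  qed
  have measS: "measure lebesgue S = integral\<^sup>L N (\<lambda>x. indicator S x * 1)"
    if "S \<subseteq> C" "S \<in> sets lebesgue" for S
    using conv[OF that, of "\<lambda>_. 1"] that by (simp add: measure_restrict_space)
  have sN: "S \<in> sets N" if "S \<subseteq> C" "S \<in> sets lebesgue" for S
    unfolding N_def using that Csets by (simp add: sets_restrict_space_iff)
  have ic: "integrable N (\<lambda>x. c)" for c :: real
    using fin by (simp add: finite_measure.integrable_const)
  have pw1: "(norm (v x - a))\<^sup>2 \<le> 2 * (norm (v x))\<^sup>2 + 2 * (norm a)\<^sup>2" for x
  proof -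
    have "norm (v x - a) \<le> norm (v x) + norm a" by (rule norm_triangle_ineq4)
    hence "(norm (v x - a))\<^sup>2 \<le> (norm (v x) + norm a)\<^sup>2"
      by (simp add: power_mono)
    also have "\<dots> \<le> 2 * (norm (v x))\<^sup>2 + 2 * (norm a)\<^sup>2"
      by (rule sq2)
    finally show ?thesis .
  qed
  have iw: "integrable N (\<lambda>x. (norm (v x - a))\<^sup>2)"
  proof (rule Bochner_Integration.integrable_bound)
    show "integrable N (\<lambda>x. 2 * (norm (v x))\<^sup>2 + 2 * (norm a)\<^sup>2)"
      using iv ic by simp
    show "(\<lambda>x. (norm (v x - a))\<^sup>2) \<in> borel_measurable N" using vm by measurable
    show "AE x in N. norm ((norm (v x - a))\<^sup>2) \<le> norm (2 * (norm (v x))\<^sup>2 + 2 * (norm a)\<^sup>2)"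
      using pw1 by (auto intro!: AE_I2)
  qed
  have Bsets: "Bm \<in> sets lebesgue" "Bk \<in> sets lebesgue" "BM \<in> sets lebesgue"
    unfolding Bm_def Bk_def BM_def by simp_all
  have BC: "Bm \<subseteq> C" "Bk \<subseteq> C" "BM \<subseteq> C" using sub by auto
  have ii: "integrable N (\<lambda>x. indicator S x * f x)" if "S \<subseteq> C" "S \<in> sets lebesgue"
     "integrable N f" for S and f :: "'a \<Rightarrow> real"
    using integrable_real_mult_indicator[OF sN[OF that(1,2)] that(3)] by (simp add: mult.commute)
  define Im where "Im = integral\<^sup>L N (\<lambda>x. indicator Bm x * (norm (v x))\<^sup>2)"
  define Ik where "Ik = integral\<^sup>L N (\<lambda>x. indicator Bk x * (norm (v x))\<^sup>2)"
  define Dm where "Dm = integral\<^sup>L N (\<lambda>x. indicator Bm x * (norm (v x - a))\<^sup>2)"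
  define Dk where "Dk = integral\<^sup>L N (\<lambda>x. indicator Bk x * (norm (v x - a))\<^sup>2)"
  define D where "D = integral\<^sup>L N (\<lambda>x. indicator BM x * (norm (v x - a))\<^sup>2)"
  define \<mu>m where "\<mu>m = measure lebesgue Bm"
  define \<mu>k where "\<mu>k = measure lebesgue Bk"
  have mum: "\<mu>m = integral\<^sup>L N (\<lambda>x. indicator Bm x :: real)"
    unfolding \<mu>m_def using measS[OF BC(1) Bsets(1)] by simp
  have muk: "\<mu>k = integral\<^sup>L N (\<lambda>x. indicator Bk x :: real)"
    unfolding \<mu>k_def using measS[OF BC(2) Bsets(2)] by simp
  have hyp: "D < Im"
    using assms(6) unfolding Im_def D_def a_def Bm_def[symmetric] BM_def[symmetric]
      conv[OF BC(1) Bsets(1)] conv[OF BC(3) Bsets(3)] .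
  have D0: "0 \<le> D" unfolding D_def by (rule integral_nonneg_AE) auto
  have DmD: "Dm \<le> D" unfolding Dm_def D_def
    by (rule integral_mono[OF ii[OF BC(1) Bsets(1) iw] ii[OF BC(3) Bsets(3) iw]])
       (use sub in \<open>auto simp: indicator_def\<close>)
  have DkD: "Dk \<le> D" unfolding Dk_def D_def
    by (rule integral_mono[OF ii[OF BC(2) Bsets(2) iw] ii[OF BC(3) Bsets(3) iw]])
       (use sub in \<open>auto simp: indicator_def\<close>)
  have pw2: "(norm a)\<^sup>2 \<le> 2 * (norm (v x))\<^sup>2 + 2 * (norm (v x - a))\<^sup>2" for x
  proof -
    have "norm a = norm (v x - (v x - a))" by simp
    also have "\<dots> \<le> norm (v x) + norm (v x - a)" by (rule norm_triangle_ineq4)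
    finally have "norm a \<le> norm (v x) + norm (v x - a)" .
    hence "(norm a)\<^sup>2 \<le> (norm (v x) + norm (v x - a))\<^sup>2" by (simp add: power_mono)
    also have "\<dots> \<le> 2 * (norm (v x))\<^sup>2 + 2 * (norm (v x - a))\<^sup>2" by (rule sq2)
    finally show ?thesis .
  qed
  have pw3: "(norm (v x))\<^sup>2 \<le> 3 * (norm (v x - a))\<^sup>2 + 3 / 2 * (norm a)\<^sup>2" for x
  proof -
    have "norm (v x) = norm ((v x - a) + a)" by simp
    also have "\<dots> \<le> norm (v x - a) + norm a" by (rule norm_triangle_ineq)
    finally have "norm (v x) \<le> norm (v x - a) + norm a" .
    hence "(norm (v x))\<^sup>2 \<le> (norm (v x - a) + norm a)\<^sup>2" by (simp add: power_mono)
    also have "\<dots> \<le> 3 * (norm (v x - a))\<^sup>2 + 3 / 2 * (norm a)\<^sup>2" by (rule sq3)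
    finally show ?thesis .
  qed
  have ind1: "integrable N (\<lambda>x. indicator S x :: real)" if "S \<subseteq> C" "S \<in> sets lebesgue" for S
    using ii[OF that ic[of 1]] by simp
  have F1: "\<mu>m * (norm a)\<^sup>2 \<le> 2 * Im + 2 * Dm"
  proof -
    have "\<mu>m * (norm a)\<^sup>2 = integral\<^sup>L N (\<lambda>x. indicator Bm x * (norm a)\<^sup>2)"
      unfolding mum by simp
    also have "\<dots> \<le> integral\<^sup>L N (\<lambda>x. 2 * (indicator Bm x * (norm (v x))\<^sup>2) + 2 * (indicator Bm x * (norm (v x - a))\<^sup>2))"
      apply (rule integral_mono)
      using ii[OF BC(1) Bsets(1) iv] ii[OF BC(1) Bsets(1) iw] ii[OF BC(1) Bsets(1) ic]
      apply auto
      using pw2 by (auto simp: indicator_def)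
    also have "\<dots> = 2 * Im + 2 * Dm"
      unfolding Im_def Dm_def
      using ii[OF BC(1) Bsets(1) iv] ii[OF BC(1) Bsets(1) iw] by simp
    finally show ?thesis .
  qed
  have F3: "Ik \<le> 3 * Dk + 3 / 2 * (norm a)\<^sup>2 * \<mu>k"
  proof -
    have "Ik \<le> integral\<^sup>L N (\<lambda>x. 3 * (indicator Bk x * (norm (v x - a))\<^sup>2) + 3 / 2 * (norm a)\<^sup>2 * indicator Bk x)"
      unfolding Ik_def
      apply (rule integral_mono)
      using ii[OF BC(2) Bsets(2) iv] ii[OF BC(2) Bsets(2) iw] ind1[OF BC(2) Bsets(2)]
      apply auto
      using pw3 by (auto simp: indicator_def)
    also have "\<dots> = 3 * Dk + 3 / 2 * (norm a)\<^sup>2 * \<mu>k"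
      unfolding Dk_def muk
      using ii[OF BC(2) Bsets(2) iw] ind1[OF BC(2) Bsets(2)] by simp
    finally show ?thesis .
  qed
  have mpos: "\<mu>m > 0" unfolding \<mu>m_def Bm_def using assms by (intro meas_ball_pos) simp
  have mle: "\<mu>m \<le> \<mu>k" unfolding \<mu>m_def \<mu>k_def
    by (rule measure_mono_fmeasurable) (use sub Bsets in \<open>auto simp: Bk_def\<close>)
  have lhs: "avg (ball x0 (\<kappa> * r)) (\<lambda>x. (norm (v x))\<^sup>2) = Ik / \<mu>k"
    unfolding avg_def Ik_def \<mu>k_def Bk_def[symmetric] conv[OF BC(2) Bsets(2)] by simp
  have rhs: "avg (ball x0 (m * r)) (\<lambda>x. (norm (v x))\<^sup>2) = Im / \<mu>m"
    unfolding avg_def Im_def \<mu>m_def Bm_def[symmetric] conv[OF BC(1) Bsets(1)] by simp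
  have "Ik \<le> 3 * Im + 3 / 2 * (norm a)\<^sup>2 * \<mu>k" using F3 DkD hyp by linarith
  moreover have "(norm a)\<^sup>2 \<le> 4 * Im / \<mu>m" using F1 DmD hyp mpos
    by (simp add: field_simps)
  moreover have "3 / 2 * (norm a)\<^sup>2 * \<mu>k \<le> 3 / 2 * (4 * Im / \<mu>m) * \<mu>k"
    using calculation(2) mpos mle by (intro mult_right_mono mult_left_mono) auto
  ultimately have "Ik \<le> 3 * Im + 6 * Im / \<mu>m * \<mu>k"
    by simp
  hence "Ik / \<mu>k \<le> 3 * Im / \<mu>k + 6 * Im / \<mu>m"
    using mpos mle by (simp add: field_simps)
  also have "3 * Im / \<mu>k \<le> 3 * Im / \<mu>m"
    using mpos mle hyp D0 by (intro divide_left_mono) auto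
  finally show ?thesis unfolding lhs rhs by simp
qed

end
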